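(* Let $(E,\star,\rho,(\cdot,\cdot)_-)$ be a pre-symplectic algebroid and let $L_1,L_2\subset E$ be Dirac structures with $E=L_1\oplus L_2$. Then $L_1$ and $L_2$ are left-symmetric algebroids with the restricted multiplication $\star$ and anchors $\rho|_{L_1}$, $\rho|_{L_2}$, and, identifying $L_2$ with $L_1^*$ via $\langle\xi,y\rangle=(\xi,y)_-$ for $\xi\in L_2$, $y\in L_1$, the pair $(L_1,L_2)$ is a left-symmetric bialgebroid.
   Context: A pre-symplectic algebroid is a vector bundle $E\to M$ with a nondegenerate skew-symmetric bilinear form $(\cdot,\cdot)_-$, an $\mathbb R$-bilinear multiplication $\star$ on $\Gamma(E)$ and a bundle map $\rho:E\to TM$ such that for all $e_i\in\Gamma(E)$: (i) $(e_1,e_2,e_3)-(e_2,e_1,e_3)=\frac16DT(e_1,e_2,e_3)$, where $(e_1,e_2,e_3)=e_1\star(e_2\star e_3)-(e_1\star e_2)\star e_3$, $T(e_1,e_2,e_3)=(e_1\star e_2,e_3)_-+(e_1,e_2\star e_3)_--(e_2\star e_1,e_3)_--(e_2,e_1\star e_3)_-$, and $D:C^\infty(M)\to\Gamma(E)$ is defined by $(Df,e)_-=\rho(e)(f)$; (ii) $\rho(e_1)(e_2,e_3)_-=(e_1\star e_2-\frac12D(e_1,e_2)_-,e_3)_-+(e_2,[e_1,e_3]_E)_-$ with $[e_1,e_2]_E=e_1\star e_2-e_2\star e_1$. A subbundle $F\subset E$ is a Dirac structure if it is maximal isotropic for $(\cdot,\cdot)_-$ and $\Gamma(F)$ is closed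 under $\star$. A left-symmetric algebroid is a vector bundle $A\to M$ with an $\mathbb R$-bilinear multiplication $\cdot_A$ on $\Gamma(A)$ with $x\cdot_A(y\cdot_Az)-(x\cdot_Ay)\cdot_Az$ symmetric in $x,y$, and an anchor $a_A$ with $x\cdot_A(fy)=f(x\cdot_Ay)+a_A(x)(f)y$, $(fx)\cdot_Ay=f(x\cdot_Ay)$; $[x,y]_A=x\cdot_Ay-y\cdot_Ax$. Coboundary: $C^{n+1}(A)=\Gamma(\wedge^nA^*\otimes A^* )$, $\delta\varphi(x_1,\dots,x_{n+1})=\sum_{i=1}^n(-1)^{i+1}a_A(x_i)\varphi(\dots,\hat{x_i},\dots,x_{n+1})-\sum_{i=1}^n(-1)^{i+1}\varphi(\dots,\hat{x_i},\dots,x_n,x_i\cdot_Ax_{n+1})+\sum_{i<j\le n}(-1)^{i+j}\varphi([x_i,x_j]_A,\dots,\hat{x_i},\dots,\hat{x_j},\dots,x_{n+1})$; $\mathfrak L_x(y_1\otimes y_2)=(x\cdot_Ay_1)\otimes y_2+y_1\otimes[x,y_2]_A$ on $\Gamma(A\otimes A)$. For left-symmetric algebroids $A,A^*$ on dual bundles, $[\cdot,\cdot]_{A^*},\delta_*,\mathfrak L_\xi$ are the analogous objects for $A^*$; $(A,A^* )$ is a left-symmetric bialgebroid if $\delta[\xi,\eta]_{A^*}=\mathfrak L_\xi\delta\eta-\mathfrak L_\eta\delta\xi$ and $\delta_*[x,y]_A=\mathfrak L_x\delta_*y-\mathfrak L_y\delta_*x$ for all $x,y\in\Gamma(A)$,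 $\xi,\eta\in\Gamma(A^* )$. *)

theory Defs
  imports Main "HOL.Real_Vector_Spaces"
begin

text \<open>Algebraic (Serre--Swan) model.  The type 'f plays the role of the commutative
real algebra C-infinity(M); the type 'e plays the role of the module of sections
Gamma(E), with the C-infinity(M)-action smult.  Vector fields on M are modelled as
real-linear derivations of 'f.  Sub-bundles are modelled by their modules of
sections (subsets of 'e).\<close>

definition module_ax :: "('f::{comm_ring_1,real_algebra_1} \<Rightarrow> 'e::ab_group_add \<Rightarrow> 'e) \<Rightarrow> bool" where
  "module_ax smult \<longleftrightarrow>
     (\<forall>f x y. smult f (x + y) = smult f x + smult f y) \<and>
     (\<forall>f g x. smult (f + g) x = smult f x + smult g x) \<and>
     (\<forall>f g x. smult (f * g) x = smult f (smult g x)) \<and>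
     (\<forall>x. smult 1 x = x)"

definition is_derivation :: "('f::{comm_ring_1,real_algebra_1} \<Rightarrow> 'f) \<Rightarrow> bool" where
  "is_derivation X \<longleftrightarrow>
     (\<forall>f g. X (f + g) = X f + X g) \<and>
     (\<forall>r f. X (of_real r * f) = of_real r * X f) \<and>
     (\<forall>f g. X (f * g) = f * X g + X f * g)"

definition flin_on :: "('f::{comm_ring_1,real_algebra_1} \<Rightarrow> 'e::ab_group_add \<Rightarrow> 'e) \<Rightarrow> 'e set \<Rightarrow> ('e \<Rightarrow> 'f) \<Rightarrow> bool" where
  "flin_on smult A \<phi> \<longleftrightarrow>
     (\<forall>x\<in>A. \<forall>y\<in>A. \<phi> (x + y) = \<phi> x + \<phi> y) \<and>
     (\<forall>f. \<forall>x\<in>A. \<phi> (smult f x) = f * \<phi> x)"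

definition submodule :: "('f::{comm_ring_1,real_algebra_1} \<Rightarrow> 'e::ab_group_add \<Rightarrow> 'e) \<Rightarrow> 'e set \<Rightarrow> bool" where
  "submodule smult A \<longleftrightarrow> 0 \<in> A \<and> (\<forall>x\<in>A. \<forall>y\<in>A. x + y \<in> A) \<and> (\<forall>f. \<forall>x\<in>A. smult f x \<in> A)"

definition rbilinear_on :: "('f::{comm_ring_1,real_algebra_1} \<Rightarrow> 'e::ab_group_add \<Rightarrow> 'e) \<Rightarrow> 'e set \<Rightarrow> ('e \<Rightarrow> 'e \<Rightarrow> 'e) \<Rightarrow> bool" where
  "rbilinear_on smult A m \<longleftrightarrow>
     (\<forall>x\<in>A. \<forall>y\<in>A. \<forall>z\<in>A. m (x + y) z = m x z + m y z \<and> m x (y + z) = m x y + m x z) \<and>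
     (\<forall>r. \<forall>x\<in>A. \<forall>y\<in>A. m (smult (of_real r) x) y = smult (of_real r) (m x y) \<and>
                         m x (smult (of_real r) y) = smult (of_real r) (m x y))"

definition anchor_on :: "('f::{comm_ring_1,real_algebra_1} \<Rightarrow> 'e::ab_group_add \<Rightarrow> 'e) \<Rightarrow> 'e set \<Rightarrow> ('e \<Rightarrow> 'f \<Rightarrow> 'f) \<Rightarrow> bool" where
  "anchor_on smult A a \<longleftrightarrow>
     (\<forall>x\<in>A. is_derivation (a x)) \<and>
     (\<forall>x\<in>A. \<forall>y\<in>A. \<forall>g. a (x + y) g = a x g + a y g) \<and>
     (\<forall>f. \<forall>x\<in>A. \<forall>g. a (smult f x) g = f * a x g)"

definition Dop :: "('e \<Rightarrow> 'e \<Rightarrow> 'f) \<Rightarrow> ('e \<Rightarrow> 'f \<Rightarrow> 'f) \<Rightarrow> 'f \<Rightarrow> 'e" where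
  "Dop pair rho f = (THE e. \<forall>x. pair e x = rho x f)"

definition assoc :: "('e::ab_group_add \<Rightarrow> 'e \<Rightarrow> 'e) \<Rightarrow> 'e \<Rightarrow> 'e \<Rightarrow> 'e \<Rightarrow> 'e" where
  "assoc m x y z = m x (m y z) - m (m x y) z"

definition Tform :: "('e \<Rightarrow> 'e \<Rightarrow> 'f::ab_group_add) \<Rightarrow> ('e \<Rightarrow> 'e \<Rightarrow> 'e) \<Rightarrow> 'e \<Rightarrow> 'e \<Rightarrow> 'e \<Rightarrow> 'f" where
  "Tform pair star e1 e2 e3 =
     pair (star e1 e2) e3 + pair e1 (star e2 e3) - pair (star e2 e1) e3 - pair e2 (star e1 e3)"

definition pre_symplectic_algebroid ::
  "('f::{comm_ring_1,real_algebra_1} \<Rightarrow> 'e::ab_group_add \<Rightarrow> 'e) \<Rightarrow> ('e \<Rightarrow> 'e \<Rightarrow> 'f) \<Rightarrow>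
   ('e \<Rightarrow> 'e \<Rightarrow> 'e) \<Rightarrow> ('e \<Rightarrow> 'f \<Rightarrow> 'f) \<Rightarrow> bool" where
  "pre_symplectic_algebroid smult pair star rho \<longleftrightarrow>
     module_ax smult \<and>
     \<comment> \<open>(.,.)_- is a skew-symmetric C-infinity(M)-bilinear form\<close>
     (\<forall>x y z. pair (x + y) z = pair x z + pair y z) \<and>
     (\<forall>f x y. pair (smult f x) y = f * pair x y) \<and>
     (\<forall>x y. pair x y = - pair y x) \<and>
     \<comment> \<open>nondegenerate: Gamma(E) \<rightarrow> Gamma(E^*) is an isomorphism\<close>
     (\<forall>\<phi>. flin_on smult UNIV \<phi> \<longrightarrow> (\<exists>!e. \<forall>x. pair e x = \<phi> x)) \<and>
     rbilinear_on smult UNIV star \<and>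
     anchor_on smult UNIV rho \<and>
     \<comment> \<open>axiom (i)\<close>
     (\<forall>e1 e2 e3. assoc star e1 e2 e3 - assoc star e2 e1 e3 =
        smult (of_real (1/6)) (Dop pair rho (Tform pair star e1 e2 e3))) \<and>
     \<comment> \<open>axiom (ii)\<close>
     (\<forall>e1 e2 e3. rho e1 (pair e2 e3) =
        pair (star e1 e2 - smult (of_real (1/2)) (Dop pair rho (pair e1 e2))) e3 +
        pair e2 (star e1 e3 - star e3 e1))"

text \<open>Orthogonal complement (of the module of sections) and Dirac structures.
  Maximal isotropic is rendered as L = L^perp.\<close>
definition orth :: "('e \<Rightarrow> 'e \<Rightarrow> 'f::zero) \<Rightarrow> 'e set \<Rightarrow> 'e set" where
  "orth pair L = {e. \<forall>x\<in>L. pair e x = 0}"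

definition dirac_structure ::
  "('f::{comm_ring_1,real_algebra_1} \<Rightarrow> 'e::ab_group_add \<Rightarrow> 'e) \<Rightarrow> ('e \<Rightarrow> 'e \<Rightarrow> 'f) \<Rightarrow>
   ('e \<Rightarrow> 'e \<Rightarrow> 'e) \<Rightarrow> 'e set \<Rightarrow> bool" where
  "dirac_structure smult pair star L \<longleftrightarrow>
     submodule smult L \<and> L = orth pair L \<and> (\<forall>x\<in>L. \<forall>y\<in>L. star x y \<in> L)"

definition direct_sum :: "'e::ab_group_add set \<Rightarrow> 'e set \<Rightarrow> bool" where
  "direct_sum L1 L2 \<longleftrightarrow> L1 \<inter> L2 = {0} \<and> (\<forall>e. \<exists>x\<in>L1. \<exists>y\<in>L2. e = x + y)"

definition left_symmetric_algebroid ::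
  "('f::{comm_ring_1,real_algebra_1} \<Rightarrow> 'e::ab_group_add \<Rightarrow> 'e) \<Rightarrow> 'e set \<Rightarrow>
   ('e \<Rightarrow> 'e \<Rightarrow> 'e) \<Rightarrow> ('e \<Rightarrow> 'f \<Rightarrow> 'f) \<Rightarrow> bool" where
  "left_symmetric_algebroid smult A m a \<longleftrightarrow>
     submodule smult A \<and>
     (\<forall>x\<in>A. \<forall>y\<in>A. m x y \<in> A) \<and>
     rbilinear_on smult A m \<and>
     anchor_on smult A a \<and>
     (\<forall>x\<in>A. \<forall>y\<in>A. \<forall>z\<in>A. assoc m x y z = assoc m y x z) \<and>
     (\<forall>f. \<forall>x\<in>A. \<forall>y\<in>A. m x (smult f y) = smult f (m x y) + smult (a x f) y) \<and>
     (\<forall>f. \<forall>x\<in>A. \<forall>y\<in>A. m (smult f x) y = smult f (m x y))"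

text \<open>pr xi x = <xi, x> for xi in B, x in A; B is identified with A^* via pr.\<close>
definition dual_pairing ::
  "('f::{comm_ring_1,real_algebra_1} \<Rightarrow> 'e::ab_group_add \<Rightarrow> 'e) \<Rightarrow> 'e set \<Rightarrow> 'e set \<Rightarrow>
   ('e \<Rightarrow> 'e \<Rightarrow> 'f) \<Rightarrow> bool" where
  "dual_pairing smult A B pr \<longleftrightarrow>
     (\<forall>\<xi>\<in>B. flin_on smult A (pr \<xi>)) \<and> (\<forall>x\<in>A. flin_on smult B (\<lambda>\<xi>. pr \<xi> x)) \<and>
     (\<forall>\<phi>. flin_on smult A \<phi> \<longrightarrow> (\<exists>!\<xi>. \<xi> \<in> B \<and> (\<forall>x\<in>A. pr \<xi> x = \<phi> x))) \<and>
     (\<forall>\<psi>. flin_on smult B \<psi> \<longrightarrow> (\<exists>!x. x \<in> A \<and> (\<forall>\<xi>\<in>B. pr \<xi> x = \<psi> \<xi>)))"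

text \<open>Coboundary on degree-1 cochains: for eta in Gamma(A^*) = B,
  (delta eta)(x1,x2) = a(x1) <eta,x2> - <eta, x1 . x2>, an element of Gamma(A^* (x) A^*)
  represented as a bilinear function on A x A.\<close>
definition delta1 :: "('e \<Rightarrow> 'f \<Rightarrow> 'f) \<Rightarrow> ('e \<Rightarrow> 'e \<Rightarrow> 'e) \<Rightarrow> ('e \<Rightarrow> 'e \<Rightarrow> 'f::ab_group_add) \<Rightarrow>
   'e \<Rightarrow> 'e \<Rightarrow> 'e \<Rightarrow> 'f" where
  "delta1 a m pr \<eta> x1 x2 = a x1 (pr \<eta> x2) - pr \<eta> (m x1 x2)"

definition Lstar :: "'e set \<Rightarrow> ('e \<Rightarrow> 'e \<Rightarrow> 'e) \<Rightarrow> ('e \<Rightarrow> 'f \<Rightarrow> 'f) \<Rightarrow> 'e set \<Rightarrow>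
   ('e \<Rightarrow> 'e \<Rightarrow> 'f::ab_group_add) \<Rightarrow> 'e \<Rightarrow> 'e \<Rightarrow> 'e" where
  "Lstar A m a B pr x \<xi> = (THE \<zeta>. \<zeta> \<in> B \<and> (\<forall>y\<in>A. pr \<zeta> y = a x (pr \<xi> y) - pr \<xi> (m x y)))"

definition adstar :: "'e set \<Rightarrow> ('e::ab_group_add \<Rightarrow> 'e \<Rightarrow> 'e) \<Rightarrow> ('e \<Rightarrow> 'f \<Rightarrow> 'f) \<Rightarrow> 'e set \<Rightarrow>
   ('e \<Rightarrow> 'e \<Rightarrow> 'f::ab_group_add) \<Rightarrow> 'e \<Rightarrow> 'e \<Rightarrow> 'e" where
  "adstar A m a B pr x \<xi> = (THE \<zeta>. \<zeta> \<in> B \<and> (\<forall>y\<in>A. pr \<zeta> y = a x (pr \<xi> y) - pr \<xi> (m x y - m y x)))"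

text \<open>The operator L_x on Gamma(A (x) A), L_x(y1 (x) y2) = (x . y1) (x) y2 + y1 (x) [x,y2],
  written on elements of Gamma(A (x) A) viewed as bilinear functions Phi on B x B = A^* x A^*.\<close>
definition lieT :: "'e set \<Rightarrow> ('e::ab_group_add \<Rightarrow> 'e \<Rightarrow> 'e) \<Rightarrow> ('e \<Rightarrow> 'f \<Rightarrow> 'f) \<Rightarrow> 'e set \<Rightarrow>
   ('e \<Rightarrow> 'e \<Rightarrow> 'f::ab_group_add) \<Rightarrow> 'e \<Rightarrow> ('e \<Rightarrow> 'e \<Rightarrow> 'f) \<Rightarrow> 'e \<Rightarrow> 'e \<Rightarrow> 'f" where
  "lieT A m a B pr x \<Phi> \<xi>1 \<xi>2 =
     a x (\<Phi> \<xi>1 \<xi>2) - \<Phi> (Lstar A m a B pr x \<xi>1) \<xi>2 - \<Phi> \<xi>1 (adstar A m a B pr x \<xi>2)"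

definition ls_bialgebroid ::
  "('f::{comm_ring_1,real_algebra_1} \<Rightarrow> 'e::ab_group_add \<Rightarrow> 'e) \<Rightarrow>
   'e set \<Rightarrow> ('e \<Rightarrow> 'e \<Rightarrow> 'e) \<Rightarrow> ('e \<Rightarrow> 'f \<Rightarrow> 'f) \<Rightarrow>
   'e set \<Rightarrow> ('e \<Rightarrow> 'e \<Rightarrow> 'e) \<Rightarrow> ('e \<Rightarrow> 'f \<Rightarrow> 'f) \<Rightarrow> ('e \<Rightarrow> 'e \<Rightarrow> 'f) \<Rightarrow> bool" where
  "ls_bialgebroid smult A mA aA B mB aB pr \<longleftrightarrow>
     left_symmetric_algebroid smult A mA aA \<and>
     left_symmetric_algebroid smult B mB aB \<and>
     dual_pairing smult A B pr \<and>
     \<comment> \<open>delta [xi,eta]_{A^*} = L_xi delta eta - L_eta delta xi, as elements of Gamma(A^* (x) A^*)\<close>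
     (\<forall>\<xi>\<in>B. \<forall>\<eta>\<in>B. \<forall>x1\<in>A. \<forall>x2\<in>A.
        delta1 aA mA pr (mB \<xi> \<eta> - mB \<eta> \<xi>) x1 x2 =
        lieT B mB aB A (\<lambda>y \<zeta>. pr \<zeta> y) \<xi> (delta1 aA mA pr \<eta>) x1 x2 -
        lieT B mB aB A (\<lambda>y \<zeta>. pr \<zeta> y) \<eta> (delta1 aA mA pr \<xi>) x1 x2) \<and>
     \<comment> \<open>delta_* [x,y]_A = L_x delta_* y - L_y delta_* x, as elements of Gamma(A (x) A)\<close>
     (\<forall>x\<in>A. \<forall>y\<in>A. \<forall>\<xi>1\<in>B. \<forall>\<xi>2\<in>B.
        delta1 aB mB (\<lambda>y \<zeta>. pr \<zeta> y) (mA x y - mA y x) \<xi>1 \<xi>2 =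
        lieT A mA aA B pr x (delta1 aB mB (\<lambda>y \<zeta>. pr \<zeta> y) y) \<xi>1 \<xi>2 -
        lieT A mA aA B pr y (delta1 aB mB (\<lambda>y \<zeta>. pr \<zeta> y) x) \<xi>1 \<xi>2)"

end

theory Submission
  imports Defs
begin

lemma num_inv:
  "(of_real (1 / numeral n) :: 'f::{comm_ring_1,real_algebra_1}) * numeral n = 1"
proof -
  have "(of_real (1 / numeral n) :: 'f) * numeral n = of_real (1 / numeral n * numeral n)"
    by (simp only: of_real_mult of_real_numeral)
  also have "\<dots> = 1" by simp
  finally show ?thesis .
qed

lemma num_cancel:
  fixes a :: "'f::{comm_ring_1,real_algebra_1}"
  assumes "numeral n * a = 0"
  shows "a = 0"
proof -
  have "a = (of_real (1 / numeral n) * numeral n) * a" by (simp only: num_inv mult_1_left)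
  also have "\<dots> = of_real (1 / numeral n) * (numeral n * a)" by (simp only: mult.assoc)
  also have "\<dots> = 0" by (simp only: assms mult_zero_right)
  finally show ?thesis .
qed

lemma half_twice:
  "(2::'f::{comm_ring_1,real_algebra_1}) * of_real (1/2) = 1"
  by (metis of_real_mult of_real_numeral of_real_1 field_sum_of_halves mult_2 times_divide_eq_right mult_1_right)

lemma sixth_six:
  "(6::'f::{comm_ring_1,real_algebra_1}) * of_real (1/6) = 1"
proof -
  have "(6::'f) * of_real (1/6) = of_real (6 * (1/6))" by (simp only: of_real_mult of_real_numeral)
  also have "\<dots> = 1" by simp
  finally show ?thesis .
qed

locale psa =
  fixes smult :: "'f::{comm_ring_1,real_algebra_1} \<Rightarrow> 'e::ab_group_add \<Rightarrow> 'e"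
    and pair :: "'e \<Rightarrow> 'e \<Rightarrow> 'f"
    and star :: "'e \<Rightarrow> 'e \<Rightarrow> 'e"
    and rho :: "'e \<Rightarrow> 'f \<Rightarrow> 'f"
  assumes psa: "pre_symplectic_algebroid smult pair star rho"
begin

lemma module: "module_ax smult" using psa unfolding pre_symplectic_algebroid_def by blast
lemma sm_add_r: "smult f (x + y) = smult f x + smult f y" using module unfolding module_ax_def by blast
lemma sm_add_l: "smult (f + g) x = smult f x + smult g x" using module unfolding module_ax_def by blast
lemma sm_mult: "smult (f * g) x = smult f (smult g x)" using module unfolding module_ax_def by blast
lemma sm_one: "smult 1 x = x" using module unfolding module_ax_def by blast
lemma sm_zero_l: "smult 0 x = 0"
  using sm_add_l[of 0 0 x] by simp
lemma sm_zero_r: "smult f 0 = 0"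
  using sm_add_r[of f 0 0] by simp
lemma sm_minus_r: "smult f (- x) = - smult f x"
proof -
  have "smult f x + smult f (- x) = 0" by (metis sm_add_r sm_zero_r add.right_inverse)
  from minus_unique[OF this] show ?thesis by simp
qed
lemma sm_neg1: "smult (-1) x = - x"
proof -
  have "x + smult (-1) x = 0" by (metis sm_add_l sm_zero_l sm_one add.right_inverse)
  from minus_unique[OF this] show ?thesis by simp
qed

lemma pa_add_l: "pair (x + y) z = pair x z + pair y z" using psa unfolding pre_symplectic_algebroid_def by blast
lemma pa_sm_l: "pair (smult f x) y = f * pair x y" using psa unfolding pre_symplectic_algebroid_def by blast
lemma skew: "pair x y = - pair y x" using psa unfolding pre_symplectic_algebroid_def by blast
lemma pa_add_r: "pair z (x + y) = pair z x + pair z y"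
  using skew[of z "x+y"] skew[of z x] skew[of z y] pa_add_l[of x y z] by simp
lemma pa_sm_r: "pair y (smult f x) = f * pair y x"
  using skew[of y "smult f x"] skew[of y x] pa_sm_l[of f x y] by simp
lemma pa_zero_l: "pair 0 x = 0" using pa_add_l[of 0 0 x] by simp
lemma pa_zero_r: "pair x 0 = 0" using pa_add_r[of x 0 0] by simp
lemma pa_minus_l: "pair (- x) y = - pair x y"
proof -
  have "pair x y + pair (- x) y = 0" by (metis pa_add_l pa_zero_l add.right_inverse)
  from minus_unique[OF this] show ?thesis by simp
qed
lemma pa_minus_r: "pair y (- x) = - pair y x"
proof -
  have "pair y x + pair y (- x) = 0" by (metis pa_add_r pa_zero_r add.right_inverse)
  from minus_unique[OF this] show ?thesis by simp
qed
lemma pa_diff_l: "pair (x - y) z = pair x z - pair y z"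
  using pa_add_l[of x "- y" z] pa_minus_l by simp
lemma pa_diff_r: "pair z (x - y) = pair z x - pair z y"
  using pa_add_r[of z x "- y"] pa_minus_r by simp
lemma pa_self: "pair x x = 0"
proof -
  have "pair x x + pair x x = 0" by (metis skew add.left_inverse)
  then have "2 * pair x x = 0" by (simp only: mult_2)
  then show ?thesis by (rule num_cancel)
qed

lemma nondeg: "flin_on smult UNIV \<phi> \<Longrightarrow> \<exists>!e. \<forall>x. pair e x = \<phi> x"
  using psa unfolding pre_symplectic_algebroid_def by blast

lemma flin_pair: "flin_on smult UNIV (\<lambda>x. pair v x)"
  by (simp add: flin_on_def pa_add_r pa_sm_r)

lemma pair_inj: assumes "\<And>z. pair u z = pair v z" shows "u = v"
proof -
  from nondeg[OF flin_pair[of v]] obtain e where "\<forall>e'. (\<forall>x. pair e' x = pair v x) \<longrightarrow> e' = e" by blast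
  then show ?thesis using assms by metis
qed

lemma rbil: "rbilinear_on smult UNIV star" using psa unfolding pre_symplectic_algebroid_def by blast
lemma st_add_l: "star (x + y) z = star x z + star y z" using rbil unfolding rbilinear_on_def by blast
lemma st_add_r: "star x (y + z) = star x y + star x z" using rbil unfolding rbilinear_on_def by blast
lemma st_zero_l: "star 0 x = 0" using st_add_l[of 0 0 x] by simp
lemma st_zero_r: "star x 0 = 0" using st_add_r[of x 0 0] by simp
lemma st_minus_l: "star (- x) y = - star x y"
proof -
  have "star x y + star (- x) y = 0" by (metis st_add_l st_zero_l add.right_inverse)
  from minus_unique[OF this] show ?thesis by simp
qed
lemma st_minus_r: "star y (- x) = - star y x"
proof -
  have "star y x + star y (- x) = 0" by (metis st_add_r st_zero_r add.right_inverse)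
  from minus_unique[OF this] show ?thesis by simp
qed
lemma st_diff_l: "star (x - y) z = star x z - star y z"
  using st_add_l[of x "- y" z] st_minus_l by simp
lemma st_diff_r: "star z (x - y) = star z x - star z y"
  using st_add_r[of z x "- y"] st_minus_r by simp

lemma anch: "anchor_on smult UNIV rho" using psa unfolding pre_symplectic_algebroid_def by blast
lemma rho_der: "is_derivation (rho x)" using anch unfolding anchor_on_def by blast
lemma rho_add_l: "rho (x + y) g = rho x g + rho y g" using anch unfolding anchor_on_def by blast
lemma rho_sm_l: "rho (smult f x) g = f * rho x g" using anch unfolding anchor_on_def by blast
lemma rho_add: "rho x (f + g) = rho x f + rho x g" using rho_der[of x] unfolding is_derivation_def by blast
lemma rho_mult: "rho x (f * g) = f * rho x g + rho x f * g" using rho_der[of x] unfolding is_derivation_def by blast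
lemma rho_ofreal: "rho x (of_real r * g) = of_real r * rho x g" using rho_der[of x] unfolding is_derivation_def by blast
lemma rho_zero: "rho x 0 = 0" using rho_add[of x 0 0] by simp
lemma rho_minus: "rho x (- g) = - rho x g"
proof -
  have "rho x g + rho x (- g) = 0" by (metis rho_add rho_zero add.right_inverse)
  from minus_unique[OF this] show ?thesis by simp
qed
lemma rho_diff: "rho x (f - g) = rho x f - rho x g"
  using rho_add[of x f "- g"] rho_minus by simp
lemma rho_zero_l: "rho 0 g = 0" using rho_add_l[of 0 0 g] by simp
lemma rho_minus_l: "rho (- x) g = - rho x g"
proof -
  have "rho x g + rho (- x) g = 0" by (metis rho_add_l rho_zero_l add.right_inverse)
  from minus_unique[OF this] show ?thesis by simp
qed
lemma rho_diff_l: "rho (x - y) g = rho x g - rho y g"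
  using rho_add_l[of x "- y" g] rho_minus_l by simp
lemma rho_numeral: "rho x (numeral n * g) = numeral n * rho x g"
  using rho_ofreal[of x "numeral n" g] by simp

abbreviation D where "D \<equiv> Dop pair rho"

lemma D_prop: "pair (D g) x = rho x g"
proof -
  have "flin_on smult UNIV (\<lambda>x. rho x g)" by (simp add: flin_on_def rho_add_l rho_sm_l)
  from nondeg[OF this] have "\<exists>!e. \<forall>x. pair e x = rho x g" .
  then have "\<forall>x. pair (THE e. \<forall>x. pair e x = rho x g) x = rho x g" by (rule theI')
  then show ?thesis by (simp add: Dop_def)
qed
lemma D_prop_r: "pair x (D g) = - rho x g" using skew[of x "D g"] D_prop by simp
lemma D_zero: "D 0 = 0" by (rule pair_inj) (simp add: D_prop rho_zero pa_zero_l)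

lemma ax_i: "assoc star e1 e2 e3 - assoc star e2 e1 e3 =
        smult (of_real (1/6)) (D (Tform pair star e1 e2 e3))"
  using psa unfolding pre_symplectic_algebroid_def by blast
lemma ax_ii: "rho e1 (pair e2 e3) =
        pair (star e1 e2 - smult (of_real (1/2)) (D (pair e1 e2))) e3 +
        pair e2 (star e1 e3 - star e3 e1)"
  using psa unfolding pre_symplectic_algebroid_def by blast

lemma ii2: "2 * rho a (pair b c) = 2 * pair (star a b) c - rho c (pair a b) + 2 * pair b (star a c) - 2 * pair b (star c a)"
proof -
  have "2 * rho a (pair b c) = 2 * pair (star a b) c - (2 * of_real (1/2)) * rho c (pair a b) + 2 * pair b (star a c) - 2 * pair b (star c a)"
    using arg_cong[OF ax_ii[of a b c], of "\<lambda>t. 2 * t"]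
    by (simp add: pa_diff_l pa_diff_r pa_sm_l D_prop algebra_simps)
  then show ?thesis by (simp add: half_twice)
qed

lemma ii2_1: "2 * rho w (rho a (pair b c)) = 2 * rho w (pair (star a b) c) - rho w (rho c (pair a b)) + 2 * rho w (pair b (star a c)) - 2 * rho w (pair b (star c a))"
  using arg_cong[OF ii2[of a b c], of "rho w"] by (simp only: rho_add rho_diff rho_numeral)

lemma i6: "6 * (pair (star a (star b c)) d - pair (star (star a b) c) d - pair (star b (star a c)) d + pair (star (star b a) c) d) =
   rho d (pair (star a b) c) + rho d (pair a (star b c)) - rho d (pair (star b a) c) - rho d (pair b (star a c))"
proof -
  have "pair (assoc star a b c - assoc star b a c) d = pair (smult (of_real (1/6)) (D (Tform pair star a b c))) d"
    using ax_i by simp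
  then have "6 * pair (assoc star a b c - assoc star b a c) d = (6 * of_real (1/6)) * rho d (Tform pair star a b c)"
    by (simp only: pa_sm_l D_prop mult.assoc)
  then show ?thesis by (simp only: sixth_six mult_1_left assoc_def Tform_def pa_diff_l pa_add_l rho_add rho_diff diff_add_eq diff_diff_eq2)
qed


lemma sm_diff_r: "smult f (x - y) = smult f x - smult f y"
  using sm_add_r[of f x "- y"] sm_minus_r by simp

section \<open>Dirac structures\<close>

lemma dir_sub: "dirac_structure smult pair star L \<Longrightarrow> submodule smult L"
  unfolding dirac_structure_def by blast
lemma dir_zero: "dirac_structure smult pair star L \<Longrightarrow> 0 \<in> L"
  unfolding dirac_structure_def submodule_def by blast
lemma dir_add: "dirac_structure smult pair star L \<Longrightarrow> x \<in> L \<Longrightarrow> y \<in> L \<Longrightarrow> x + y \<in> L"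
  unfolding dirac_structure_def submodule_def by blast
lemma dir_sm: "dirac_structure smult pair star L \<Longrightarrow> x \<in> L \<Longrightarrow> smult f x \<in> L"
  unfolding dirac_structure_def submodule_def by blast
lemma dir_minus: "dirac_structure smult pair star L \<Longrightarrow> x \<in> L \<Longrightarrow> - x \<in> L"
  using dir_sm[of L x "-1"] sm_neg1 by simp
lemma dir_diff: "dirac_structure smult pair star L \<Longrightarrow> x \<in> L \<Longrightarrow> y \<in> L \<Longrightarrow> x - y \<in> L"
  using dir_add[of L x "- y"] dir_minus[of L y] by simp
lemma dir_star: "dirac_structure smult pair star L \<Longrightarrow> x \<in> L \<Longrightarrow> y \<in> L \<Longrightarrow> star x y \<in> L"
  unfolding dirac_structure_def by blast
lemma dir_iso: "dirac_structure smult pair star L \<Longrightarrow> x \<in> L \<Longrightarrow> y \<in> L \<Longrightarrow> pair x y = 0"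
proof -
  assume a: "dirac_structure smult pair star L" "x \<in> L" "y \<in> L"
  then have "L = orth pair L" unfolding dirac_structure_def by blast
  with a have "x \<in> orth pair L" by simp
  with a(3) show ?thesis unfolding orth_def by blast
qed

lemma leib_L:
  assumes L: "dirac_structure smult pair star L" and x: "x \<in> L" and y: "y \<in> L"
  shows "star x (smult f y) = smult f (star x y) + smult (rho x f) y"
proof (rule pair_inj)
  fix z
  have xy: "pair x y = 0" using dir_iso[OF L x y] .
  have xfy: "pair x (smult f y) = 0" by (simp add: pa_sm_r xy)
  have e1: "rho x (pair (smult f y) z) = pair (star x (smult f y)) z + pair (smult f y) (star x z - star z x)"
    using ax_ii[of x "smult f y" z] by (simp add: xfy D_zero sm_zero_r)
  have e2: "rho x (pair y z) = pair (star x y) z + pair y (star x z - star z x)"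
    using ax_ii[of x y z] by (simp add: xy D_zero sm_zero_r)
  have "pair (star x (smult f y)) z = f * rho x (pair y z) + rho x f * pair y z - f * pair y (star x z - star z x)"
    using e1 by (simp add: pa_sm_l rho_mult)
  also have "\<dots> = f * pair (star x y) z + rho x f * pair y z" using e2 by (simp add: algebra_simps)
  finally show "pair (star x (smult f y)) z = pair (smult f (star x y) + smult (rho x f) y) z"
    by (simp add: pa_add_l pa_sm_l)
qed

lemma pair_inj_r: assumes "\<And>z. pair z u = pair z v" shows "u = v"
proof (rule pair_inj)
  fix z show "pair u z = pair v z" using assms[of z] skew[of u z] skew[of v z] by simp
qed

lemma leib_R:
  assumes L: "dirac_structure smult pair star L" and x: "x \<in> L" and y: "y \<in> L"
  shows "star (smult f x) y = smult f (star x y)"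
proof (rule pair_inj_r)
  fix w
  let ?h = "smult (of_real (1/2)) (D (pair y w))"
  have e1: "rho y (pair w (smult f x)) = pair (star y w - ?h) (smult f x) + pair w (star y (smult f x) - star (smult f x) y)"
    using ax_ii[of y w "smult f x"] by simp
  have e2: "rho y (pair w x) = pair (star y w - ?h) x + pair w (star y x - star x y)"
    using ax_ii[of y w x] by simp
  have l: "star y (smult f x) = smult f (star y x) + smult (rho y f) x" using leib_L[OF L y x] .
  have "pair w (star (smult f x) y) = f * pair w (star x y)"
    using e1 e2 by (simp add: l pa_sm_r pa_diff_r pa_add_r rho_mult algebra_simps)
  then show "pair w (star (smult f x) y) = pair w (smult f (star x y))" by (simp add: pa_sm_r)
qed

lemma lsa:
  assumes L: "dirac_structure smult pair star L"
  shows "left_symmetric_algebroid smult L star rho"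
  unfolding left_symmetric_algebroid_def
proof (intro conjI ballI allI)
  show "submodule smult L" by (rule dir_sub[OF L])
  show "\<And>x y. x \<in> L \<Longrightarrow> y \<in> L \<Longrightarrow> star x y \<in> L" by (rule dir_star[OF L])
  show "rbilinear_on smult L star" using rbil unfolding rbilinear_on_def by blast
  show "anchor_on smult L rho" using anch unfolding anchor_on_def by blast
  show "\<And>f x y. x \<in> L \<Longrightarrow> y \<in> L \<Longrightarrow> star x (smult f y) = smult f (star x y) + smult (rho x f) y"
    by (rule leib_L[OF L])
  show "\<And>f x y. x \<in> L \<Longrightarrow> y \<in> L \<Longrightarrow> star (smult f x) y = smult f (star x y)"
    by (rule leib_R[OF L])
  fix x y z assume xyz: "x \<in> L" "y \<in> L" "z \<in> L"
  have "Tform pair star x y z = 0"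
    unfolding Tform_def using xyz by (simp add: dir_iso[OF L] dir_star[OF L])
  then have "assoc star x y z - assoc star y x z = 0" using ax_i[of x y z] by (simp add: D_zero sm_zero_r)
  then show "assoc star x y z = assoc star y x z" by simp
qed


lemma two_half: "2 * (of_real (1/2) * r) = (r::'f)"
  by (simp only: mult.assoc[symmetric] half_twice mult_1_left)

lemma half_lemma:
  assumes "2 * a + c - d = (0::'f)"
  shows "a + of_real (1/2) * c - of_real (1/2) * d = 0"
proof -
  have h2: "of_real (1/2) * 2 = (1::'f)" using half_twice by (simp only: mult.commute)
  have "of_real (1/2) * (2 * a + c - d) = (of_real (1/2) * 2) * a + of_real (1/2) * c - of_real (1/2) * d"
    by (simp only: distrib_left right_diff_distrib mult.assoc)
  then have "a + of_real (1/2) * c - of_real (1/2) * d = of_real (1/2) * (2 * a + c - d)"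
    by (simp only: h2 mult_1_left)
  also have "\<dots> = 0" by (simp only: assms mult_zero_right)
  finally show ?thesis .
qed

lemma D_minus: "D (- g) = - D g"
  by (rule pair_inj) (simp add: D_prop rho_minus pa_minus_l)

lemma rep_gen:
  assumes L: "dirac_structure smult pair star L" and L': "dirac_structure smult pair star L'"
    and I: "L \<inter> L' = {0}" and S: "\<forall>e. \<exists>a\<in>L. \<exists>b\<in>L'. e = a + b"
    and phi: "flin_on smult L \<phi>"
  shows "\<exists>!\<xi>. \<xi> \<in> L' \<and> (\<forall>x\<in>L. pair \<xi> x = \<phi> x)"
proof -
  define p where "p e = (SOME a. a \<in> L \<and> e - a \<in> L')" for e
  have pP: "p e \<in> L \<and> e - p e \<in> L'" for e
  proof -
    from S obtain a b where ab: "a \<in> L" "b \<in> L'" "e = a + b" by blast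
    then have "a \<in> L \<and> e - a \<in> L'" by simp
    then show ?thesis unfolding p_def by (rule someI)
  qed
  have pU: "p e = a" if a: "a \<in> L" "e - a \<in> L'" for e a
  proof -
    have m1: "p e - a \<in> L" using dir_diff[OF L] pP a by blast
    have "(e - a) - (e - p e) \<in> L'" using dir_diff[OF L'] pP a by blast
    moreover have "(e - a) - (e - p e) = p e - a" by (simp add: algebra_simps)
    ultimately have "p e - a \<in> L'" by simp
    with m1 I have "p e - a = 0" by blast
    then show ?thesis by simp
  qed
  have p_add: "p (e + e') = p e + p e'" for e e'
  proof (rule pU)
    show "p e + p e' \<in> L" using dir_add[OF L] pP by blast
    have "(e - p e) + (e' - p e') \<in> L'" using dir_add[OF L'] pP by blast
    moreover have "(e - p e) + (e' - p e') = e + e' - (p e + p e')" by (simp add: algebra_simps)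
    ultimately show "e + e' - (p e + p e') \<in> L'" by simp
  qed
  have p_sm: "p (smult f e) = smult f (p e)" for f e
  proof (rule pU)
    show "smult f (p e) \<in> L" using dir_sm[OF L] pP by blast
    have "smult f (e - p e) \<in> L'" using dir_sm[OF L'] pP by blast
    then show "smult f e - smult f (p e) \<in> L'" by (simp add: sm_diff_r)
  qed
  have p_id: "p x = x" if "x \<in> L" for x
    using pU[OF that] dir_zero[OF L'] by simp
  have fl: "flin_on smult UNIV (\<lambda>e. \<phi> (p e))"
    unfolding flin_on_def
  proof (intro conjI ballI allI)
    fix x y :: 'e
    show "\<phi> (p (x + y)) = \<phi> (p x) + \<phi> (p y)"
      using phi pP unfolding flin_on_def by (simp add: p_add)
  next
    fix f x
    show "\<phi> (p (smult f x)) = f * \<phi> (p x)"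
      using phi pP unfolding flin_on_def by (simp add: p_sm)
  qed
  from nondeg[OF fl] obtain e0 where e0: "\<forall>z. pair e0 z = \<phi> (p z)" by blast
  define \<xi> where "\<xi> = e0 - p e0"
  have ex: "\<xi> \<in> L' \<and> (\<forall>x\<in>L. pair \<xi> x = \<phi> x)"
  proof (intro conjI ballI)
    show "\<xi> \<in> L'" unfolding \<xi>_def using pP by blast
    fix x assume x: "x \<in> L"
    have "pair (p e0) x = 0" using dir_iso[OF L] pP x by blast
    then show "pair \<xi> x = \<phi> x" unfolding \<xi>_def using e0 p_id[OF x] by (simp add: pa_diff_l)
  qed
  show ?thesis
  proof (rule ex1I[of _ \<xi>])
    show "\<xi> \<in> L' \<and> (\<forall>x\<in>L. pair \<xi> x = \<phi> x)" by (rule ex)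
    fix \<zeta> assume z: "\<zeta> \<in> L' \<and> (\<forall>x\<in>L. pair \<zeta> x = \<phi> x)"
    show "\<zeta> = \<xi>"
    proof (rule pair_inj)
      fix w
      from S obtain a b where ab: "a \<in> L" "b \<in> L'" "w = a + b" by blast
      have "pair \<zeta> b = 0" "pair \<xi> b = 0" using dir_iso[OF L'] ab z ex by blast+
      then show "pair \<zeta> w = pair \<xi> w" using ab z ex by (simp add: pa_add_r)
    qed
  qed
qed

lemma flipeq: "(\<lambda>a b. pair b a) = (\<lambda>a b. - pair a b)"
  by (rule ext)+ (rule skew)

lemma D_flip: "Dop (\<lambda>a b. - pair a b) rho g = - D g"
  unfolding Dop_def
proof (rule the_equality)
  show "\<forall>x. - pair (- (THE e. \<forall>x. pair e x = rho x g)) x = rho x g"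
    by (simp add: pa_minus_l D_prop[unfolded Dop_def])
  fix e assume h: "\<forall>x. - pair e x = rho x g"
  show "e = - (THE e. \<forall>x. pair e x = rho x g)"
  proof (rule pair_inj)
    fix z have "- pair e z = rho z g" using h by blast
    then have "pair e z = - rho z g" by (metis minus_minus)
    then show "pair e z = pair (- (THE e. \<forall>x. pair e x = rho x g)) z"
      by (simp add: pa_minus_l D_prop[unfolded Dop_def])
  qed
qed

lemma flip_psa: "pre_symplectic_algebroid smult (\<lambda>a b. pair b a) star rho"
  unfolding flipeq pre_symplectic_algebroid_def
proof (intro conjI allI impI)
  show "module_ax smult" by (rule module)
  show "rbilinear_on smult UNIV star" by (rule rbil)
  show "anchor_on smult UNIV rho" by (rule anch)
  fix x y z :: 'e
  show "- pair (x + y) z = - pair x z + - pair y z" by (simp add: pa_add_l)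
  show "- pair y z = - (- pair z y)" using skew[of y z] by simp
  fix f :: 'f
  show "- pair (smult f x) y = f * - pair x y" by (simp add: pa_sm_l)
next
  fix \<phi> :: "'e \<Rightarrow> 'f" assume fl: "flin_on smult UNIV \<phi>"
  have fl': "flin_on smult UNIV (\<lambda>x. - \<phi> x)" using fl unfolding flin_on_def by simp
  from nondeg[OF fl'] show "\<exists>!e. \<forall>x. - pair e x = \<phi> x"
    by (metis minus_minus)
next
  fix e1 e2 e3 :: 'e
  have T: "Tform (\<lambda>a b. - pair a b) star e1 e2 e3 = - Tform pair star e1 e2 e3"
    by (simp add: Tform_def algebra_simps)
  show "assoc star e1 e2 e3 - assoc star e2 e1 e3 =
        smult (of_real (1 / 6)) (Dop (\<lambda>a b. - pair a b) rho (Tform (\<lambda>a b. - pair a b) star e1 e2 e3))"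
    unfolding T D_flip D_minus minus_minus by (rule ax_i)
  show "rho e1 (- pair e2 e3) =
        - pair (star e1 e2 - smult (of_real (1 / 2)) (Dop (\<lambda>a b. - pair a b) rho (- pair e1 e2))) e3 +
        - pair e2 (star e1 e3 - star e3 e1)"
    unfolding D_flip D_minus minus_minus rho_minus using ax_ii[of e1 e2 e3] by simp
qed

lemma dirac_flip: "dirac_structure smult pair star L \<Longrightarrow> dirac_structure smult (\<lambda>a b. pair b a) star L"
  unfolding dirac_structure_def orth_def
proof -
  assume a: "submodule smult L \<and> L = {e. \<forall>x\<in>L. pair e x = 0} \<and> (\<forall>x\<in>L. \<forall>y\<in>L. star x y \<in> L)"
  have "{e. \<forall>x\<in>L. pair x e = 0} = {e. \<forall>x\<in>L. pair e x = 0}"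
    using skew by (metis (no_types, opaque_lifting) neg_equal_0_iff_equal)
  with a show "submodule smult L \<and> L = {e. \<forall>x\<in>L. pair x e = 0} \<and> (\<forall>x\<in>L. \<forall>y\<in>L. star x y \<in> L)"
    by simp
qed

context
  fixes L1 L2
  assumes D1: "dirac_structure smult pair star L1"
    and D2: "dirac_structure smult pair star L2"
    and DS: "direct_sum L1 L2"
begin

lemma cl1: "x \<in> L1 \<Longrightarrow> y \<in> L1 \<Longrightarrow> star x y \<in> L1" by (rule dir_star[OF D1])
lemma cl2: "x \<in> L2 \<Longrightarrow> y \<in> L2 \<Longrightarrow> star x y \<in> L2" by (rule dir_star[OF D2])
lemma iso1: "x \<in> L1 \<Longrightarrow> y \<in> L1 \<Longrightarrow> pair x y = 0" by (rule dir_iso[OF D1])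
lemma iso2: "x \<in> L2 \<Longrightarrow> y \<in> L2 \<Longrightarrow> pair x y = 0" by (rule dir_iso[OF D2])

lemma S1:
  assumes "xi \<in> L2" and "eta \<in> L2" and "x1 \<in> L1"
  shows "(rho xi (pair eta x1)) + (- pair (star xi eta) x1) + (- pair eta (star xi x1)) + (pair eta (star x1 xi)) = 0"
proof -
  have z0: "(2 * rho xi (pair eta x1)) - (2 * pair (star xi eta) x1 - rho x1 (pair xi eta) + 2 * pair eta (star xi x1) - 2 * pair eta (star x1 xi)) = 0" by (simp only: ii2[of "xi" "eta" "x1"] diff_self)
  have s0: "pair (star xi eta) x1 = - pair x1 (star xi eta)" by (rule skew)
  have o0: "pair xi eta = 0" by (rule iso2) (simp_all add: assms cl1 cl2)
  have big: "2 * ((rho xi (pair eta x1)) + (- pair (star xi eta) x1) + (- pair eta (star xi x1)) + (pair eta (star x1 xi))) = (1) * ((2 * rho xi (pair eta x1)) - (2 * pair (star xi eta) x1 - rho x1 (pair xi eta) + 2 * pair eta (star xi x1) - 2 * pair eta (star x1 xi)))"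
    by (simp add: s0 o0 pa_diff_l pa_diff_r pa_add_l pa_add_r st_diff_l st_diff_r rho_diff rho_diff_l rho_add rho_add_l rho_minus rho_minus_l rho_zero algebra_simps)
  have zs: "(1) * ((2 * rho xi (pair eta x1)) - (2 * pair (star xi eta) x1 - rho x1 (pair xi eta) + 2 * pair eta (star xi x1) - 2 * pair eta (star x1 xi))) = 0" by (simp only: z0 mult_zero_right add_0_left add_0_right)
  have "2 * ((rho xi (pair eta x1)) + (- pair (star xi eta) x1) + (- pair eta (star xi x1)) + (pair eta (star x1 xi))) = 0" by (subst big) (rule zs)
  then show ?thesis by (rule num_cancel)
qed

lemma S2:
  assumes "xi \<in> L2" and "eta \<in> L2" and "x2 \<in> L1"
  shows "(2 * rho xi (pair eta x2)) + (-2 * pair (star xi eta) x2) + (2 * pair (star eta xi) x2) + (-2 * pair eta (star xi x2)) + (- rho eta (pair xi x2)) = 0"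
proof -
  have z0: "(2 * rho xi (pair x2 eta)) - (2 * pair (star xi x2) eta - rho eta (pair xi x2) + 2 * pair x2 (star xi eta) - 2 * pair x2 (star eta xi)) = 0" by (simp only: ii2[of "xi" "x2" "eta"] diff_self)
  have s0: "pair x2 eta = - pair eta x2" by (rule skew)
  have s1: "pair (star xi eta) x2 = - pair x2 (star xi eta)" by (rule skew)
  have s2: "pair (star xi x2) eta = - pair eta (star xi x2)" by (rule skew)
  have s3: "pair (star eta xi) x2 = - pair x2 (star eta xi)" by (rule skew)
  have big: "1 * ((2 * rho xi (pair eta x2)) + (-2 * pair (star xi eta) x2) + (2 * pair (star eta xi) x2) + (-2 * pair eta (star xi x2)) + (- rho eta (pair xi x2))) = (- 1) * ((2 * rho xi (pair x2 eta)) - (2 * pair (star xi x2) eta - rho eta (pair xi x2) + 2 * pair x2 (star xi eta) - 2 * pair x2 (star eta xi)))"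
    by (simp add: s0 s1 s2 s3 pa_diff_l pa_diff_r pa_add_l pa_add_r st_diff_l st_diff_r rho_diff rho_diff_l rho_add rho_add_l rho_minus rho_minus_l rho_zero algebra_simps)
  have zs: "(- 1) * ((2 * rho xi (pair x2 eta)) - (2 * pair (star xi x2) eta - rho eta (pair xi x2) + 2 * pair x2 (star xi eta) - 2 * pair x2 (star eta xi))) = 0" by (simp only: z0 mult_zero_right add_0_left add_0_right)
  have "1 * ((2 * rho xi (pair eta x2)) + (-2 * pair (star xi eta) x2) + (2 * pair (star eta xi) x2) + (-2 * pair eta (star xi x2)) + (- rho eta (pair xi x2))) = 0" by (subst big) (rule zs)
  then show ?thesis by (simp only: mult_1_left)
qed

lemma S3:
  assumes "eta \<in> L2" and "x1 \<in> L1" and "x2 \<in> L1"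
  shows "(2 * rho x1 (pair eta x2)) + (-2 * pair eta (star x1 x2)) + (-2 * pair x1 (star eta x2)) + (- rho x1 (pair eta x2)) = 0"
proof -
  have z0: "(2 * rho eta (pair x2 x1)) - (2 * pair (star eta x2) x1 - rho x1 (pair eta x2) + 2 * pair x2 (star eta x1) - 2 * pair x2 (star x1 eta)) = 0" by (simp only: ii2[of "eta" "x2" "x1"] diff_self)
  have z1: "(2 * rho x1 (pair x2 eta)) - (2 * pair (star x1 x2) eta - rho eta (pair x1 x2) + 2 * pair x2 (star x1 eta) - 2 * pair x2 (star eta x1)) = 0" by (simp only: ii2[of "x1" "x2" "eta"] diff_self)
  have s0: "pair x2 eta = - pair eta x2" by (rule skew)
  have s1: "pair (star eta x2) x1 = - pair x1 (star eta x2)" by (rule skew)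
  have s2: "pair (star x1 x2) eta = - pair eta (star x1 x2)" by (rule skew)
  have o0: "pair x1 x2 = 0" by (rule iso1) (simp_all add: assms cl1 cl2)
  have o1: "pair x2 x1 = 0" by (rule iso1) (simp_all add: assms cl1 cl2)
  have big: "1 * ((2 * rho x1 (pair eta x2)) + (-2 * pair eta (star x1 x2)) + (-2 * pair x1 (star eta x2)) + (- rho x1 (pair eta x2))) = (- 1) * ((2 * rho eta (pair x2 x1)) - (2 * pair (star eta x2) x1 - rho x1 (pair eta x2) + 2 * pair x2 (star eta x1) - 2 * pair x2 (star x1 eta))) + (- 1) * ((2 * rho x1 (pair x2 eta)) - (2 * pair (star x1 x2) eta - rho eta (pair x1 x2) + 2 * pair x2 (star x1 eta) - 2 * pair x2 (star eta x1)))"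
    by (simp add: s0 s1 s2 o0 o1 pa_diff_l pa_diff_r pa_add_l pa_add_r st_diff_l st_diff_r rho_diff rho_diff_l rho_add rho_add_l rho_minus rho_minus_l rho_zero algebra_simps)
  have zs: "(- 1) * ((2 * rho eta (pair x2 x1)) - (2 * pair (star eta x2) x1 - rho x1 (pair eta x2) + 2 * pair x2 (star eta x1) - 2 * pair x2 (star x1 eta))) + (- 1) * ((2 * rho x1 (pair x2 eta)) - (2 * pair (star x1 x2) eta - rho eta (pair x1 x2) + 2 * pair x2 (star x1 eta) - 2 * pair x2 (star eta x1))) = 0" by (simp only: z0 z1 mult_zero_right add_0_left add_0_right)
  have "1 * ((2 * rho x1 (pair eta x2)) + (-2 * pair eta (star x1 x2)) + (-2 * pair x1 (star eta x2)) + (- rho x1 (pair eta x2))) = 0" by (subst big) (rule zs)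
  then show ?thesis by (simp only: mult_1_left)
qed

lemma S4:
  assumes "eta \<in> L2" and "x1 \<in> L1" and "x2 \<in> L1"
  shows "(rho x1 (pair eta x2)) + (- pair eta (star x1 x2)) + (- pair x2 (star eta x1)) + (pair x2 (star x1 eta)) = 0"
proof -
  have z0: "(2 * rho x1 (pair x2 eta)) - (2 * pair (star x1 x2) eta - rho eta (pair x1 x2) + 2 * pair x2 (star x1 eta) - 2 * pair x2 (star eta x1)) = 0" by (simp only: ii2[of "x1" "x2" "eta"] diff_self)
  have s0: "pair x2 eta = - pair eta x2" by (rule skew)
  have s1: "pair (star x1 x2) eta = - pair eta (star x1 x2)" by (rule skew)
  have o0: "pair x1 x2 = 0" by (rule iso1) (simp_all add: assms cl1 cl2)
  have big: "2 * ((rho x1 (pair eta x2)) + (- pair eta (star x1 x2)) + (- pair x2 (star eta x1)) + (pair x2 (star x1 eta))) = (- 1) * ((2 * rho x1 (pair x2 eta)) - (2 * pair (star x1 x2) eta - rho eta (pair x1 x2) + 2 * pair x2 (star x1 eta) - 2 * pair x2 (star eta x1)))"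
    by (simp add: s0 s1 o0 pa_diff_l pa_diff_r pa_add_l pa_add_r st_diff_l st_diff_r rho_diff rho_diff_l rho_add rho_add_l rho_minus rho_minus_l rho_zero algebra_simps)
  have zs: "(- 1) * ((2 * rho x1 (pair x2 eta)) - (2 * pair (star x1 x2) eta - rho eta (pair x1 x2) + 2 * pair x2 (star x1 eta) - 2 * pair x2 (star eta x1))) = 0" by (simp only: z0 mult_zero_right add_0_left add_0_right)
  have "2 * ((rho x1 (pair eta x2)) + (- pair eta (star x1 x2)) + (- pair x2 (star eta x1)) + (pair x2 (star x1 eta))) = 0" by (subst big) (rule zs)
  then show ?thesis by (rule num_cancel)
qed

lemma TGT:
  assumes "xi \<in> L2" and "eta \<in> L2" and "x1 \<in> L1" and "x2 \<in> L1"
  shows "(2 * rho x1 (pair (star xi eta) x2)) + (-2 * rho x1 (pair (star eta xi) x2)) + (-2 * pair (star xi eta) (star x1 x2)) + (2 * pair (star eta xi) (star x1 x2)) + (-2 * rho xi (rho x1 (pair eta x2))) + (2 * rho xi (pair eta (star x1 x2))) + (2 * rho eta (rho x1 (pair xi x2))) + (-2 * rho eta (pair xi (star x1 x2))) + (-2 * pair (star eta x2) (star xi x1)) + (2 * pair (star eta x2) (star x1 xi)) + (rho (star xi x1) (pair eta x2)) + (- rho (star x1 xi) (pair eta x2)) + (-2 * pair (star eta x1) (star xi x2)) + (2 * pair (star x1 eta) (star xi x2)) + (- rho (star eta x1) (pair xi x2)) + (rho (star x1 eta) (pair xi x2)) = 0"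
proof -
  have z0: "(2 * rho xi (pair x2 (star eta x1))) - (2 * pair (star xi x2) (star eta x1) - rho (star eta x1) (pair xi x2) + 2 * pair x2 (star xi (star eta x1)) - 2 * pair x2 (star (star eta x1) xi)) = 0" by (simp only: ii2[of "xi" "x2" "(star eta x1)"] diff_self)
  have z1: "(2 * rho xi (pair x2 (star x1 eta))) - (2 * pair (star xi x2) (star x1 eta) - rho (star x1 eta) (pair xi x2) + 2 * pair x2 (star xi (star x1 eta)) - 2 * pair x2 (star (star x1 eta) xi)) = 0" by (simp only: ii2[of "xi" "x2" "(star x1 eta)"] diff_self)
  have z2: "(2 * rho eta (pair x2 (star xi x1))) - (2 * pair (star eta x2) (star xi x1) - rho (star xi x1) (pair eta x2) + 2 * pair x2 (star eta (star xi x1)) - 2 * pair x2 (star (star xi x1) eta)) = 0" by (simp only: ii2[of "eta" "x2" "(star xi x1)"] diff_self)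
  have z3: "(2 * rho eta (pair x2 (star x1 xi))) - (2 * pair (star eta x2) (star x1 xi) - rho (star x1 xi) (pair eta x2) + 2 * pair x2 (star eta (star x1 xi)) - 2 * pair x2 (star (star x1 xi) eta)) = 0" by (simp only: ii2[of "eta" "x2" "(star x1 xi)"] diff_self)
  have z4: "(2 * rho x1 (pair x2 (star xi eta))) - (2 * pair (star x1 x2) (star xi eta) - rho (star xi eta) (pair x1 x2) + 2 * pair x2 (star x1 (star xi eta)) - 2 * pair x2 (star (star xi eta) x1)) = 0" by (simp only: ii2[of "x1" "x2" "(star xi eta)"] diff_self)
  have z5: "(2 * rho x1 (pair x2 (star eta xi))) - (2 * pair (star x1 x2) (star eta xi) - rho (star eta xi) (pair x1 x2) + 2 * pair x2 (star x1 (star eta xi)) - 2 * pair x2 (star (star eta xi) x1)) = 0" by (simp only: ii2[of "x1" "x2" "(star eta xi)"] diff_self)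
  have z6: "(2 * rho eta (rho x1 (pair x2 xi))) - (2 * rho eta (pair (star x1 x2) xi) - rho eta (rho xi (pair x1 x2)) + 2 * rho eta (pair x2 (star x1 xi)) - 2 * rho eta (pair x2 (star xi x1))) = 0" by (simp only: ii2_1[of "eta" "x1" "x2" "xi"] diff_self)
  have z7: "(2 * rho xi (rho x1 (pair x2 eta))) - (2 * rho xi (pair (star x1 x2) eta) - rho xi (rho eta (pair x1 x2)) + 2 * rho xi (pair x2 (star x1 eta)) - 2 * rho xi (pair x2 (star eta x1))) = 0" by (simp only: ii2_1[of "xi" "x1" "x2" "eta"] diff_self)
  have z8: "(6 * (pair (star xi (star x1 eta)) x2 - pair (star (star xi x1) eta) x2 - pair (star x1 (star xi eta)) x2 + pair (star (star x1 xi) eta) x2)) - (rho x2 (pair (star xi x1) eta) + rho x2 (pair xi (star x1 eta)) - rho x2 (pair (star x1 xi) eta) - rho x2 (pair x1 (star xi eta))) = 0" by (simp only: i6[of "xi" "x1" "eta" "x2"] diff_self)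
  have z9: "(6 * (pair (star eta (star x1 xi)) x2 - pair (star (star eta x1) xi) x2 - pair (star x1 (star eta xi)) x2 + pair (star (star x1 eta) xi) x2)) - (rho x2 (pair (star eta x1) xi) + rho x2 (pair eta (star x1 xi)) - rho x2 (pair (star x1 eta) xi) - rho x2 (pair x1 (star eta xi))) = 0" by (simp only: i6[of "eta" "x1" "xi" "x2"] diff_self)
  have z10: "(6 * (pair (star xi (star eta x1)) x2 - pair (star (star xi eta) x1) x2 - pair (star eta (star xi x1)) x2 + pair (star (star eta xi) x1) x2)) - (rho x2 (pair (star xi eta) x1) + rho x2 (pair xi (star eta x1)) - rho x2 (pair (star eta xi) x1) - rho x2 (pair eta (star xi x1))) = 0" by (simp only: i6[of "xi" "eta" "x1" "x2"] diff_self)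
  have s0: "pair x2 xi = - pair xi x2" by (rule skew)
  have s1: "pair x2 eta = - pair eta x2" by (rule skew)
  have s2: "pair (star xi eta) x1 = - pair x1 (star xi eta)" by (rule skew)
  have s3: "pair (star xi eta) x2 = - pair x2 (star xi eta)" by (rule skew)
  have s4: "pair (star xi x1) eta = - pair eta (star xi x1)" by (rule skew)
  have s5: "pair (star xi (star eta x1)) x2 = - pair x2 (star xi (star eta x1))" by (rule skew)
  have s6: "pair (star xi (star x1 eta)) x2 = - pair x2 (star xi (star x1 eta))" by (rule skew)
  have s7: "pair (star eta xi) x1 = - pair x1 (star eta xi)" by (rule skew)
  have s8: "pair (star eta xi) x2 = - pair x2 (star eta xi)" by (rule skew)
  have s9: "pair (star eta x1) xi = - pair xi (star eta x1)" by (rule skew)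
  have s10: "pair (star eta x1) (star xi x2) = - pair (star xi x2) (star eta x1)" by (rule skew)
  have s11: "pair (star eta x2) (star xi x1) = - pair (star xi x1) (star eta x2)" by (rule skew)
  have s12: "pair (star eta (star xi x1)) x2 = - pair x2 (star eta (star xi x1))" by (rule skew)
  have s13: "pair (star eta (star x1 xi)) x2 = - pair x2 (star eta (star x1 xi))" by (rule skew)
  have s14: "pair (star x1 xi) eta = - pair eta (star x1 xi)" by (rule skew)
  have s15: "pair (star x1 eta) xi = - pair xi (star x1 eta)" by (rule skew)
  have s16: "pair (star x1 eta) (star xi x2) = - pair (star xi x2) (star x1 eta)" by (rule skew)
  have s17: "pair (star x1 x2) xi = - pair xi (star x1 x2)" by (rule skew)
  have s18: "pair (star x1 x2) eta = - pair eta (star x1 x2)" by (rule skew)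
  have s19: "pair (star x1 x2) (star xi eta) = - pair (star xi eta) (star x1 x2)" by (rule skew)
  have s20: "pair (star x1 x2) (star eta xi) = - pair (star eta xi) (star x1 x2)" by (rule skew)
  have s21: "pair (star x1 (star xi eta)) x2 = - pair x2 (star x1 (star xi eta))" by (rule skew)
  have s22: "pair (star x1 (star eta xi)) x2 = - pair x2 (star x1 (star eta xi))" by (rule skew)
  have s23: "pair (star (star xi eta) x1) x2 = - pair x2 (star (star xi eta) x1)" by (rule skew)
  have s24: "pair (star (star xi x1) eta) x2 = - pair x2 (star (star xi x1) eta)" by (rule skew)
  have s25: "pair (star (star eta xi) x1) x2 = - pair x2 (star (star eta xi) x1)" by (rule skew)
  have s26: "pair (star (star eta x1) xi) x2 = - pair x2 (star (star eta x1) xi)" by (rule skew)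
  have s27: "pair (star (star x1 xi) eta) x2 = - pair x2 (star (star x1 xi) eta)" by (rule skew)
  have s28: "pair (star (star x1 eta) xi) x2 = - pair x2 (star (star x1 eta) xi)" by (rule skew)
  have o0: "pair x1 x2 = 0" by (rule iso1) (simp_all add: assms cl1 cl2)
  have big: "3 * ((2 * rho x1 (pair (star xi eta) x2)) + (-2 * rho x1 (pair (star eta xi) x2)) + (-2 * pair (star xi eta) (star x1 x2)) + (2 * pair (star eta xi) (star x1 x2)) + (-2 * rho xi (rho x1 (pair eta x2))) + (2 * rho xi (pair eta (star x1 x2))) + (2 * rho eta (rho x1 (pair xi x2))) + (-2 * rho eta (pair xi (star x1 x2))) + (-2 * pair (star eta x2) (star xi x1)) + (2 * pair (star eta x2) (star x1 xi)) + (rho (star xi x1) (pair eta x2)) + (- rho (star x1 xi) (pair eta x2)) + (-2 * pair (star eta x1) (star xi x2)) + (2 * pair (star x1 eta) (star xi x2)) + (- rho (star eta x1) (pair xi x2)) + (rho (star x1 eta) (pair xi x2))) = (- 3) * ((2 * rho xi (pair x2 (star eta x1))) - (2 * pair (star xi x2) (star eta x1) - rho (star eta x1) (pair xi x2) + 2 * pair x2 (star xi (star eta x1)) - 2 * pair x2 (star (star eta x1) xi))) + (3) * ((2 * rho xi (pair x2 (star x1 eta))) - (2 * pair (star xi x2) (star x1 eta) - rho (star x1 eta) (pair xi x2) + 2 * pair x2 (star xi (star x1 eta)) - 2 * pair x2 (star (star x1 eta) xi))) + (3) * ((2 * rho eta (pair x2 (star xi x1))) - (2 * pair (star eta x2)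 (star xi x1) - rho (star xi x1) (pair eta x2) + 2 * pair x2 (star eta (star xi x1)) - 2 * pair x2 (star (star xi x1) eta))) + (- 3) * ((2 * rho eta (pair x2 (star x1 xi))) - (2 * pair (star eta x2) (star x1 xi) - rho (star x1 xi) (pair eta x2) + 2 * pair x2 (star eta (star x1 xi)) - 2 * pair x2 (star (star x1 xi) eta))) + (- 3) * ((2 * rho x1 (pair x2 (star xi eta))) - (2 * pair (star x1 x2) (star xi eta) - rho (star xi eta) (pair x1 x2) + 2 * pair x2 (star x1 (star xi eta)) - 2 * pair x2 (star (star xi eta) x1))) + (3) * ((2 * rho x1 (pair x2 (star eta xi))) - (2 * pair (star x1 x2) (star eta xi) - rho (star eta xi) (pair x1 x2) + 2 * pair x2 (star x1 (star eta xi)) - 2 * pair x2 (star (star eta xi) x1))) + (- 3) * ((2 * rho eta (rho x1 (pair x2 xi))) - (2 * rho eta (pair (star x1 x2) xi) - rho eta (rho xi (pair x1 x2)) + 2 * rho eta (pair x2 (star x1 xi)) - 2 * rho eta (pair x2 (star xi x1)))) + (3) * ((2 * rho xi (rho x1 (pair x2 eta))) - (2 * rho xi (pair (star x1 x2) eta) - rho xi (rho eta (pair x1 x2)) + 2 * rho xi (pair x2 (star x1 eta)) - 2 * rho xi (pair x2 (star eta x1)))) + (- 1) * ((6 * (pair (star xi (star x1 eta)) x2 - pair (star (star xi x1) eta) x2 - pair (star x1 (star xi eta)) x2 + pair (star (star x1 xi) eta) x2)) - (rho x2 (pair (star xi x1) eta) + rho x2 (pair xi (star x1 eta)) - rho x2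 (pair (star x1 xi) eta) - rho x2 (pair x1 (star xi eta)))) + (1) * ((6 * (pair (star eta (star x1 xi)) x2 - pair (star (star eta x1) xi) x2 - pair (star x1 (star eta xi)) x2 + pair (star (star x1 eta) xi) x2)) - (rho x2 (pair (star eta x1) xi) + rho x2 (pair eta (star x1 xi)) - rho x2 (pair (star x1 eta) xi) - rho x2 (pair x1 (star eta xi)))) + (1) * ((6 * (pair (star xi (star eta x1)) x2 - pair (star (star xi eta) x1) x2 - pair (star eta (star xi x1)) x2 + pair (star (star eta xi) x1) x2)) - (rho x2 (pair (star xi eta) x1) + rho x2 (pair xi (star eta x1)) - rho x2 (pair (star eta xi) x1) - rho x2 (pair eta (star xi x1))))"
    by (simp add: s0 s1 s2 s3 s4 s5 s6 s7 s8 s9 s10 s11 s12 s13 s14 s15 s16 s17 s18 s19 s20 s21 s22 s23 s24 s25 s26 s27 s28 o0 pa_diff_l pa_diff_r pa_add_l pa_add_r st_diff_l st_diff_r rho_diff rho_diff_l rho_add rho_add_l rho_minus rho_minus_l rho_zero algebra_simps)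
  have zs: "(- 3) * ((2 * rho xi (pair x2 (star eta x1))) - (2 * pair (star xi x2) (star eta x1) - rho (star eta x1) (pair xi x2) + 2 * pair x2 (star xi (star eta x1)) - 2 * pair x2 (star (star eta x1) xi))) + (3) * ((2 * rho xi (pair x2 (star x1 eta))) - (2 * pair (star xi x2) (star x1 eta) - rho (star x1 eta) (pair xi x2) + 2 * pair x2 (star xi (star x1 eta)) - 2 * pair x2 (star (star x1 eta) xi))) + (3) * ((2 * rho eta (pair x2 (star xi x1))) - (2 * pair (star eta x2) (star xi x1) - rho (star xi x1) (pair eta x2) + 2 * pair x2 (star eta (star xi x1)) - 2 * pair x2 (star (star xi x1) eta))) + (- 3) * ((2 * rho eta (pair x2 (star x1 xi))) - (2 * pair (star eta x2) (star x1 xi) - rho (star x1 xi) (pair eta x2) + 2 * pair x2 (star eta (star x1 xi)) - 2 * pair x2 (star (star x1 xi) eta))) + (- 3) * ((2 * rho x1 (pair x2 (star xi eta))) - (2 * pair (star x1 x2) (star xi eta) - rho (star xi eta) (pair x1 x2) + 2 * pair x2 (star x1 (star xi eta)) - 2 * pair x2 (star (star xi eta) x1))) + (3) * ((2 * rho x1 (pair x2 (star eta xi))) - (2 * pair (star x1 x2) (star eta xi) - rho (star eta xi) (pair x1 x2) + 2 * pair x2 (star x1 (star eta xi)) - 2 * pair x2 (star (star eta xi) x1))) + (- 3) * ((2 * rho eta (rho x1 (pair x2 xi))) - (2 * rho eta (pair (star x1 x2) xi) - rho eta (rho xi (pair x1 x2)) + 2 * rho eta (pair x2 (star x1 xi))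 - 2 * rho eta (pair x2 (star xi x1)))) + (3) * ((2 * rho xi (rho x1 (pair x2 eta))) - (2 * rho xi (pair (star x1 x2) eta) - rho xi (rho eta (pair x1 x2)) + 2 * rho xi (pair x2 (star x1 eta)) - 2 * rho xi (pair x2 (star eta x1)))) + (- 1) * ((6 * (pair (star xi (star x1 eta)) x2 - pair (star (star xi x1) eta) x2 - pair (star x1 (star xi eta)) x2 + pair (star (star x1 xi) eta) x2)) - (rho x2 (pair (star xi x1) eta) + rho x2 (pair xi (star x1 eta)) - rho x2 (pair (star x1 xi) eta) - rho x2 (pair x1 (star xi eta)))) + (1) * ((6 * (pair (star eta (star x1 xi)) x2 - pair (star (star eta x1) xi) x2 - pair (star x1 (star eta xi)) x2 + pair (star (star x1 eta) xi) x2)) - (rho x2 (pair (star eta x1) xi) + rho x2 (pair eta (star x1 xi)) - rho x2 (pair (star x1 eta) xi) - rho x2 (pair x1 (star eta xi)))) + (1) * ((6 * (pair (star xi (star eta x1)) x2 - pair (star (star xi eta) x1) x2 - pair (star eta (star xi x1)) x2 + pair (star (star eta xi) x1) x2)) - (rho x2 (pair (star xi eta) x1) + rho x2 (pair xi (star eta x1)) - rho x2 (pair (star eta xi) x1) - rho x2 (pair eta (star xi x1)))) = 0" by (simp only: z0 z1 z2 z3 z4 z5 z6 z7 z8 z9 z10 mult_zero_right add_0_left add_0_right)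
  have "3 * ((2 * rho x1 (pair (star xi eta) x2)) + (-2 * rho x1 (pair (star eta xi) x2)) + (-2 * pair (star xi eta) (star x1 x2)) + (2 * pair (star eta xi) (star x1 x2)) + (-2 * rho xi (rho x1 (pair eta x2))) + (2 * rho xi (pair eta (star x1 x2))) + (2 * rho eta (rho x1 (pair xi x2))) + (-2 * rho eta (pair xi (star x1 x2))) + (-2 * pair (star eta x2) (star xi x1)) + (2 * pair (star eta x2) (star x1 xi)) + (rho (star xi x1) (pair eta x2)) + (- rho (star x1 xi) (pair eta x2)) + (-2 * pair (star eta x1) (star xi x2)) + (2 * pair (star x1 eta) (star xi x2)) + (- rho (star eta x1) (pair xi x2)) + (rho (star x1 eta) (pair xi x2))) = 0" by (subst big) (rule zs)
  then show ?thesis by (rule num_cancel)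
qed

lemma decomp: obtains a b where "a \<in> L1" "b \<in> L2" "e = a + b"
  using DS unfolding direct_sum_def by blast

lemma int12: "L1 \<inter> L2 = {0}" using DS unfolding direct_sum_def by blast
lemma span12: "\<forall>e. \<exists>a\<in>L1. \<exists>b\<in>L2. e = a + b" using DS unfolding direct_sum_def by blast
lemma span21: "\<forall>e. \<exists>a\<in>L2. \<exists>b\<in>L1. e = a + b" using span12 by (metis add.commute)

lemma uniq1:
  assumes u: "u \<in> L1" and v: "v \<in> L1" and h: "\<forall>y\<in>L2. pair y u = pair y v"
  shows "u = v"
proof (rule pair_inj_r)
  fix z
  obtain a b where ab: "a \<in> L1" "b \<in> L2" "z = a + b" by (rule decomp)
  have "pair a u = 0" "pair a v = 0" using iso1 ab u v by blast+
  then show "pair z u = pair z v" using ab h by (simp add: pa_add_l)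
qed

lemma Lstar_eq:
  assumes xi: "xi \<in> L2" and x1: "x1 \<in> L1" and u1: "u1 \<in> L1" and u2: "u2 \<in> L2"
    and U: "star xi x1 - star x1 xi = u1 + u2"
  shows "Lstar L2 star rho L1 (\<lambda>y \<zeta>. pair \<zeta> y) xi x1 = u1"
proof -
  have char: "pair y u1 = rho xi (pair y x1) - pair (star xi y) x1" if y: "y \<in> L2" for y
  proof -
    have "pair y (u1 + u2) = pair y u1" using iso2[OF y u2] by (simp add: pa_add_r)
    then have "pair y (star xi x1 - star x1 xi) = pair y u1" using U by simp
    then have "pair y (star xi x1) - pair y (star x1 xi) = pair y u1" by (simp only: pa_diff_r)
    moreover have "rho xi (pair y x1) + - pair (star xi y) x1 + - pair y (star xi x1) + pair y (star x1 xi) = 0"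
      by (rule S1[OF xi y x1])
    ultimately show ?thesis by (simp add: algebra_simps)
  qed
  show ?thesis unfolding Lstar_def
  proof (rule the_equality)
    show "u1 \<in> L1 \<and> (\<forall>y\<in>L2. pair y u1 = rho xi (pair y x1) - pair (star xi y) x1)"
      using u1 char by blast
    fix z assume z: "z \<in> L1 \<and> (\<forall>y\<in>L2. pair y z = rho xi (pair y x1) - pair (star xi y) x1)"
    show "z = u1" by (rule uniq1) (use z u1 char in auto)
  qed
qed

lemma adstar_eq:
  assumes xi: "xi \<in> L2" and x2: "x2 \<in> L1" and w1: "w1 \<in> L1" and w2: "w2 \<in> L2"
    and W: "star xi x2 - smult (of_real (1/2)) (D (pair xi x2)) = w1 + w2"
  shows "adstar L2 star rho L1 (\<lambda>y \<zeta>. pair \<zeta> y) xi x2 = w1"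
proof -
  have char: "pair y w1 = rho xi (pair y x2) - pair (star xi y - star y xi) x2" if y: "y \<in> L2" for y
  proof -
    have "pair y (w1 + w2) = pair y w1" using iso2[OF y w2] by (simp add: pa_add_r)
    then have "pair y (star xi x2 - smult (of_real (1/2)) (D (pair xi x2))) = pair y w1" using W by simp
    then have e1: "pair y w1 = pair y (star xi x2) + of_real (1/2) * rho y (pair xi x2)"
      by (simp add: pa_diff_r pa_sm_r D_prop_r)
    have s2: "2 * rho xi (pair y x2) + -2 * pair (star xi y) x2 + 2 * pair (star y xi) x2 + -2 * pair y (star xi x2) + - rho y (pair xi x2) = 0"
      by (rule S2[OF xi y x2])
    have "2 * (rho xi (pair y x2) - pair (star xi y - star y xi) x2 - (pair y (star xi x2) + of_real (1/2) * rho y (pair xi x2)))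
        = 2 * rho xi (pair y x2) - 2 * pair (star xi y) x2 + 2 * pair (star y xi) x2 - 2 * pair y (star xi x2) - rho y (pair xi x2)"
      by (simp only: pa_diff_l right_diff_distrib distrib_left two_half) (simp add: algebra_simps)
    also have "\<dots> = 0" using s2 by (simp add: algebra_simps)
    finally have "rho xi (pair y x2) - pair (star xi y - star y xi) x2 - (pair y (star xi x2) + of_real (1/2) * rho y (pair xi x2)) = 0"
      by (rule num_cancel)
    with e1 show ?thesis by simp
  qed
  show ?thesis unfolding adstar_def
  proof (rule the_equality)
    show "w1 \<in> L1 \<and> (\<forall>y\<in>L2. pair y w1 = rho xi (pair y x2) - pair (star xi y - star y xi) x2)"
      using w1 char by blast
    fix z assume z: "z \<in> L1 \<and> (\<forall>y\<in>L2. pair y z = rho xi (pair y x2) - pair (star xi y - star y xi) x2)"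
    show "z = w1" by (rule uniq1) (use z w1 char in auto)
  qed
qed

lemma Phi_l:
  assumes eta: "eta \<in> L2" and l: "l \<in> L1" and x2: "x2 \<in> L1"
  shows "delta1 rho star pair eta l x2 = pair l (star eta x2 - smult (of_real (1/2)) (D (pair eta x2)))"
proof -
  have s3: "2 * rho l (pair eta x2) + -2 * pair eta (star l x2) + -2 * pair l (star eta x2) + - rho l (pair eta x2) = 0"
    by (rule S3[OF eta l x2])
  have "2 * (delta1 rho star pair eta l x2 - pair l (star eta x2 - smult (of_real (1/2)) (D (pair eta x2))))
      = 2 * rho l (pair eta x2) - 2 * pair eta (star l x2) - (2 * pair l (star eta x2) + rho l (pair eta x2))"
    by (simp only: delta1_def pa_diff_r pa_sm_r D_prop_r right_diff_distrib distrib_left mult_minus_right diff_minus_eq_add two_half)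
  also have "\<dots> = 0" using s3 by (simp add: algebra_simps)
  finally have "delta1 rho star pair eta l x2 - pair l (star eta x2 - smult (of_real (1/2)) (D (pair eta x2))) = 0"
    by (rule num_cancel)
  then show ?thesis by simp
qed

lemma Phi_r:
  assumes eta: "eta \<in> L2" and x1: "x1 \<in> L1" and a: "a \<in> L1"
  shows "delta1 rho star pair eta x1 a = pair a (star eta x1 - star x1 eta)"
  using S4[OF eta x1 a] by (simp add: delta1_def pa_diff_r algebra_simps)

lemma cond1:
  "\<forall>xi\<in>L2. \<forall>eta\<in>L2. \<forall>x1\<in>L1. \<forall>x2\<in>L1.
        delta1 rho star pair (star xi eta - star eta xi) x1 x2 =
        lieT L2 star rho L1 (\<lambda>y \<zeta>. pair \<zeta> y) xi (delta1 rho star pair eta) x1 x2 -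
        lieT L2 star rho L1 (\<lambda>y \<zeta>. pair \<zeta> y) eta (delta1 rho star pair xi) x1 x2"
proof (intro ballI)
  fix xi eta x1 x2 assume xi: "xi \<in> L2" and eta: "eta \<in> L2" and x1: "x1 \<in> L1" and x2: "x2 \<in> L1"
  define Ux where "Ux = star xi x1 - star x1 xi"
  define Uy where "Uy = star eta x1 - star x1 eta"
  define Wx where "Wx = star xi x2 - smult (of_real (1/2)) (D (pair xi x2))"
  define Wy where "Wy = star eta x2 - smult (of_real (1/2)) (D (pair eta x2))"
  obtain ux1 ux2 where ux: "ux1 \<in> L1" "ux2 \<in> L2" "Ux = ux1 + ux2" by (rule decomp)
  obtain uy1 uy2 where uy: "uy1 \<in> L1" "uy2 \<in> L2" "Uy = uy1 + uy2" by (rule decomp)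
  obtain wx1 wx2 where wx: "wx1 \<in> L1" "wx2 \<in> L2" "Wx = wx1 + wx2" by (rule decomp)
  obtain wy1 wy2 where wy: "wy1 \<in> L1" "wy2 \<in> L2" "Wy = wy1 + wy2" by (rule decomp)
  have Lx: "Lstar L2 star rho L1 (\<lambda>y \<zeta>. pair \<zeta> y) xi x1 = ux1"
    by (rule Lstar_eq[OF xi x1 ux(1) ux(2)]) (use ux Ux_def in simp)
  have Ly: "Lstar L2 star rho L1 (\<lambda>y \<zeta>. pair \<zeta> y) eta x1 = uy1"
    by (rule Lstar_eq[OF eta x1 uy(1) uy(2)]) (use uy Uy_def in simp)
  have Ax: "adstar L2 star rho L1 (\<lambda>y \<zeta>. pair \<zeta> y) xi x2 = wx1"
    by (rule adstar_eq[OF xi x2 wx(1) wx(2)]) (use wx Wx_def in simp)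
  have Ay: "adstar L2 star rho L1 (\<lambda>y \<zeta>. pair \<zeta> y) eta x2 = wy1"
    by (rule adstar_eq[OF eta x2 wy(1) wy(2)]) (use wy Wy_def in simp)
  have P1: "delta1 rho star pair eta ux1 x2 = pair ux1 Wy" unfolding Wy_def by (rule Phi_l[OF eta ux(1) x2])
  have P2: "delta1 rho star pair eta x1 wx1 = pair wx1 Uy" unfolding Uy_def by (rule Phi_r[OF eta x1 wx(1)])
  have P3: "delta1 rho star pair xi uy1 x2 = pair uy1 Wx" unfolding Wx_def by (rule Phi_l[OF xi uy(1) x2])
  have P4: "delta1 rho star pair xi x1 wy1 = pair wy1 Ux" unfolding Ux_def by (rule Phi_r[OF xi x1 wy(1)])
  have proj1: "pair wy1 Ux - pair ux1 Wy = pair Wy Ux"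
  proof -
    have "pair wy1 ux1 = 0" "pair ux1 wy1 = 0" "pair wy2 ux2 = 0" using iso1 iso2 ux wy by blast+
    moreover have "pair wy2 ux1 = - pair ux1 wy2" by (rule skew)
    ultimately show ?thesis using ux(3) wy(3) by (simp add: pa_add_l pa_add_r)
  qed
  have proj2: "pair uy1 Wx - pair wx1 Uy = pair Uy Wx"
  proof -
    have "pair uy1 wx1 = 0" "pair wx1 uy1 = 0" "pair uy2 wx2 = 0" using iso1 iso2 uy wx by blast+
    moreover have "pair uy2 wx1 = - pair wx1 uy2" by (rule skew)
    ultimately show ?thesis using uy(3) wx(3) by (simp add: pa_add_l pa_add_r)
  qed
  let ?A = "delta1 rho star pair (star xi eta - star eta xi) x1 x2 - rho xi (delta1 rho star pair eta x1 x2)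
     + rho eta (delta1 rho star pair xi x1 x2) - pair (star eta x2) Ux - pair Uy (star xi x2)"
  let ?R1 = "rho Ux (pair eta x2)"
  let ?R2 = "rho Uy (pair xi x2)"
  have T: "2 * ?A + ?R1 - ?R2 = 0"
    using TGT[OF xi eta x1 x2] unfolding Ux_def Uy_def
    by (simp add: delta1_def pa_diff_l pa_diff_r rho_diff rho_diff_l algebra_simps)
  have fin: "?A + of_real (1/2) * ?R1 - of_real (1/2) * ?R2 = 0" using half_lemma[OF T] .
  have WU: "pair Wy Ux = pair (star eta x2) Ux - of_real (1/2) * ?R1"
    unfolding Wy_def by (simp add: pa_diff_l pa_sm_l D_prop)
  have UW: "pair Uy Wx = pair Uy (star xi x2) + of_real (1/2) * ?R2"
    unfolding Wx_def by (simp add: pa_diff_r pa_sm_r D_prop_r)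
  have "lieT L2 star rho L1 (\<lambda>y \<zeta>. pair \<zeta> y) xi (delta1 rho star pair eta) x1 x2 -
        lieT L2 star rho L1 (\<lambda>y \<zeta>. pair \<zeta> y) eta (delta1 rho star pair xi) x1 x2
     = (rho xi (delta1 rho star pair eta x1 x2) - pair ux1 Wy - pair wx1 Uy)
       - (rho eta (delta1 rho star pair xi x1 x2) - pair uy1 Wx - pair wy1 Ux)"
    unfolding lieT_def Lx Ly Ax Ay P1 P2 P3 P4 by simp
  also have "\<dots> = rho xi (delta1 rho star pair eta x1 x2) - rho eta (delta1 rho star pair xi x1 x2)
       + (pair wy1 Ux - pair ux1 Wy) + (pair uy1 Wx - pair wx1 Uy)"
    by (simp add: algebra_simps)
  also have "\<dots> = rho xi (delta1 rho star pair eta x1 x2) - rho eta (delta1 rho star pair xi x1 x2)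
       + pair Wy Ux + pair Uy Wx" by (simp only: proj1 proj2)
  also have "\<dots> = delta1 rho star pair (star xi eta - star eta xi) x1 x2"
  proof -
    have "delta1 rho star pair (star xi eta - star eta xi) x1 x2 - (rho xi (delta1 rho star pair eta x1 x2) - rho eta (delta1 rho star pair xi x1 x2)
       + pair Wy Ux + pair Uy Wx) = ?A + of_real (1/2) * ?R1 - of_real (1/2) * ?R2"
      unfolding WU UW by (simp add: algebra_simps)
    with fin show ?thesis by simp
  qed
  finally show "delta1 rho star pair (star xi eta - star eta xi) x1 x2 =
        lieT L2 star rho L1 (\<lambda>y \<zeta>. pair \<zeta> y) xi (delta1 rho star pair eta) x1 x2 -
        lieT L2 star rho L1 (\<lambda>y \<zeta>. pair \<zeta> y) eta (delta1 rho star pair xi) x1 x2" by simp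
qed

lemma dual12: "dual_pairing smult L1 L2 pair"
  unfolding dual_pairing_def
proof (intro conjI ballI allI impI)
  fix xi assume "xi \<in> L2"
  show "flin_on smult L1 (pair xi)" by (simp add: flin_on_def pa_add_r pa_sm_r)
next
  fix x assume "x \<in> L1"
  show "flin_on smult L2 (\<lambda>\<xi>. pair \<xi> x)" by (simp add: flin_on_def pa_add_l pa_sm_l)
next
  fix \<phi> assume "flin_on smult L1 \<phi>"
  then show "\<exists>!\<xi>. \<xi> \<in> L2 \<and> (\<forall>x\<in>L1. pair \<xi> x = \<phi> x)"
    by (rule rep_gen[OF D1 D2 int12 span12])
next
  fix \<psi> assume fl: "flin_on smult L2 \<psi>"
  have fl': "flin_on smult L2 (\<lambda>x. - \<psi> x)" using fl unfolding flin_on_def by simp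
  have i21: "L2 \<inter> L1 = {0}" using int12 by blast
  have ex: "\<exists>!x. x \<in> L1 \<and> (\<forall>\<xi>\<in>L2. pair x \<xi> = - \<psi> \<xi>)"
    by (rule rep_gen[OF D2 D1 i21 span21 fl'])
  have eqv: "(pair x \<xi> = - \<psi> \<xi>) = (pair \<xi> x = \<psi> \<xi>)" for x \<xi>
    using skew[of x \<xi>] by auto
  show "\<exists>!x. x \<in> L1 \<and> (\<forall>\<xi>\<in>L2. pair \<xi> x = \<psi> \<xi>)"
    using ex by (simp only: eqv)
qed


end
end

theorem mainTheorem12:
  fixes smult :: "'f::{comm_ring_1,real_algebra_1} \<Rightarrow> 'e::ab_group_add \<Rightarrow> 'e"
    and pair :: "'e \<Rightarrow> 'e \<Rightarrow> 'f"
    and star :: "'e \<Rightarrow> 'e \<Rightarrow> 'e"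
    and rho :: "'e \<Rightarrow> 'f \<Rightarrow> 'f"
    and L1 L2 :: "'e set"
  assumes "pre_symplectic_algebroid smult pair star rho"
    and "dirac_structure smult pair star L1"
    and "dirac_structure smult pair star L2"
    and "direct_sum L1 L2"
  shows "left_symmetric_algebroid smult L1 star rho \<and>
         left_symmetric_algebroid smult L2 star rho \<and>
         ls_bialgebroid smult L1 star rho L2 star rho pair"
proof -
  interpret P: psa smult pair star rho by unfold_locales (rule assms(1))
  have Qp: "psa smult (\<lambda>a b. pair b a) star rho" by unfold_locales (rule P.flip_psa)
  interpret Q: psa smult "\<lambda>a b. pair b a" star rho by (rule Qp)
  have d1': "dirac_structure smult (\<lambda>a b. pair b a) star L1" by (rule P.dirac_flip[OF assms(2)])
  have d2': "dirac_structure smult (\<lambda>a b. pair b a) star L2" by (rule P.dirac_flip[OF assms(3)])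
  have ds21: "direct_sum L2 L1" using assms(4) unfolding direct_sum_def by (metis Int_commute add.commute)
  note c1 = P.cond1[OF assms(2,3,4)]
  note c2 = Q.cond1[OF d2' d1' ds21]
  have l1: "left_symmetric_algebroid smult L1 star rho" by (rule P.lsa[OF assms(2)])
  have l2: "left_symmetric_algebroid smult L2 star rho" by (rule P.lsa[OF assms(3)])
  have dp: "dual_pairing smult L1 L2 pair" by (rule P.dual12[OF assms(2,3,4)])
  show ?thesis unfolding ls_bialgebroid_def using l1 l2 dp c1 c2 by simp
qed

end
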